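(* For any $n\geq 1$, $b\geq 2$ and even, $R_n(b)$ listed in co-Reflected Gray Code Order is a $3$-adjacent Gray code.
   Context: A restricted growth function of length $n$ is an integer sequence $s_1s_2\ldots s_n$ with $s_1=0$ and $0\leq s_{i+1}\leq \max\{s_j\}_{j=1}^i+1$ for $1\leq i\leq n-1$; $R_n$ is the set of these, and for $b\geq1$, $R_n(b)=\{s_1\ldots s_n\in R_n : \max\{s_i\}_{i=1}^n\leq b\}$. The co-Reflected Gray Code Order on $\{0,1,\ldots,m-1\}^n$ ($m\geq2$) is defined by: $s_1\ldots s_n$ is less than $t_1\ldots t_n$ if, for the position $k$ with $s_i=t_i$ ($1\leq i\leq k-1$) and $s_k\neq t_k$, either $U_k$ is even and $s_k<t_k$, or $U_k$ is odd and $s_k>t_k$, where $U_k=|\{i\in\{1,\ldots,k-1\}: s_i\neq0,\ s_i \text{ even}\}|$. A list of same-length sequences is a $d$-adjacent Gray code if successive sequences differ in at most $d$ positions and these positions are adjacent. *)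

theory Defs
  imports Main
begin

text \<open>Sequences are 0-indexed lists: position i of the list is s_(i+1) of the paper.\<close>

definition is_rgf :: "nat list \<Rightarrow> bool" where
  "is_rgf s \<longleftrightarrow> s \<noteq> [] \<and> s ! 0 = 0 \<and>
     (\<forall>i. Suc i < length s \<longrightarrow> s ! Suc i \<le> Max (set (take (Suc i) s)) + 1)"


definition RGF_bounded :: "nat \<Rightarrow> nat \<Rightarrow> nat list set" where
  "RGF_bounded n b = {s. length s = n \<and> is_rgf s \<and> Max (set s) \<le> b}"

definition U :: "nat list \<Rightarrow> nat \<Rightarrow> nat" where
  "U s k = card {i. i < k \<and> s ! i \<noteq> 0 \<and> even (s ! i)}"

definition coRGC_less :: "nat list \<Rightarrow> nat list \<Rightarrow> bool" where
  "coRGC_less s t \<longleftrightarrow> length s = length t \<and>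
     (\<exists>k < length s. take k s = take k t \<and> s ! k \<noteq> t ! k \<and>
        ((even (U s k) \<and> s ! k < t ! k) \<or> (odd (U s k) \<and> s ! k > t ! k)))"

definition diff_positions :: "nat list \<Rightarrow> nat list \<Rightarrow> nat set" where
  "diff_positions s t = {k. k < length s \<and> s ! k \<noteq> t ! k}"

definition adjacent_gray :: "nat \<Rightarrow> nat list list \<Rightarrow> bool" where
  "adjacent_gray d L \<longleftrightarrow>
     (\<forall>x\<in>set L. \<forall>y\<in>set L. length x = length y) \<and>
     (\<forall>i. Suc i < length L \<longrightarrow>
        card (diff_positions (L ! i) (L ! Suc i)) \<le> d \<and>
        (\<exists>a c. diff_positions (L ! i) (L ! Suc i) = {a..<c}))"

end

theory Submission
  imports Defs
begin

lemma U_take: "U s k = U (take k s) k"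
  unfolding U_def by (rule arg_cong[where f=card]) auto

lemma U_eq: "take k s = take k t \<Longrightarrow> U s k = U t k"
  by (metis U_take)

lemma co_irrefl: "\<not> coRGC_less s s"
  unfolding coRGC_less_def by auto

lemma take_eq_nth: "take k s = take k t \<Longrightarrow> i < k \<Longrightarrow> s ! i = t ! i"
  by (metis nth_take)

lemma co_intro:
  assumes "length s = length w" "k < length s" "take k s = take k w" "s ! k \<noteq> w ! k"
    "(even (U s k) \<and> s ! k < w ! k) \<or> (odd (U s k) \<and> s ! k > w ! k)"
  shows "coRGC_less s w"
  unfolding coRGC_less_def using assms by blast

lemma co_trans:
  assumes "coRGC_less s t" "coRGC_less t w" shows "coRGC_less s w"
proof -
  from assms(1) obtain k where k: "k < length s" "take k s = take k t" "s ! k \<noteq> t ! k"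
    "(even (U s k) \<and> s ! k < t ! k) \<or> (odd (U s k) \<and> s ! k > t ! k)" and l1: "length s = length t"
    unfolding coRGC_less_def by blast
  from assms(2) obtain k' where k': "k' < length t" "take k' t = take k' w" "t ! k' \<noteq> w ! k'"
    "(even (U t k') \<and> t ! k' < w ! k') \<or> (odd (U t k') \<and> t ! k' > w ! k')" and l2: "length t = length w"
    unfolding coRGC_less_def by blast
  consider "k < k'" | "k' < k" | "k = k'" by linarith
  then show ?thesis
  proof cases
    case 1
    have "take k t = take k w" using k'(2) 1
      by (metis min.strict_order_iff take_take)
    moreover have "t ! k = w ! k" using k'(2) 1 by (metis take_eq_nth)
    ultimately show ?thesis using k l1 l2 unfolding coRGC_less_def by auto
  next
    case 2
    have "take k' s = take k' t" using k(2) 2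
      by (metis min.strict_order_iff take_take)
    moreover have "s ! k' = t ! k'" using k(2) 2 by (metis take_eq_nth)
    moreover have "U s k' = U t k'" using calculation(1) by (rule U_eq)
    ultimately show ?thesis using k' l1 l2 2 k(1) unfolding coRGC_less_def
      by (intro conjI exI[of _ k']) auto
  next
    case 3
    have U: "U t k = U s k" using k(2) by (metis U_eq)
    have tw: "take k s = take k w" using k(2) k'(2) 3 by simp
    have c: "(even (U s k) \<and> s ! k < w ! k) \<or> (odd (U s k) \<and> s ! k > w ! k)"
      using k(4) k'(4) U 3 by auto
    then have ne: "s ! k \<noteq> w ! k" by auto
    have "length s = length w" using l1 l2 by simp
    then show ?thesis using k(1) tw ne c by (rule co_intro[where k=k])
  qed
qed

lemma co_total:
  assumes "length s = length t" "s \<noteq> t"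
  shows "coRGC_less s t \<or> coRGC_less t s"
proof -
  have ex: "\<exists>k. k < length s \<and> s ! k \<noteq> t ! k"
  proof (rule ccontr)
    assume "\<not> (\<exists>k. k < length s \<and> s ! k \<noteq> t ! k)"
    then have "\<forall>k < length s. s ! k = t ! k" by simp
    then have "s = t" using assms(1) by (simp add: nth_equalityI)
    then show False using assms(2) by simp
  qed
  define k where "k = (LEAST k. k < length s \<and> s ! k \<noteq> t ! k)"
  have kk: "k < length s" "s ! k \<noteq> t ! k"
    using LeastI_ex[OF ex] unfolding k_def by auto
  have tk: "take k s = take k t"
  proof (rule nth_equalityI)
    show "length (take k s) = length (take k t)" using assms by simp
    fix i assume "i < length (take k s)"
    then have "i < k" by simp
    then have "\<not> (i < length s \<and> s ! i \<noteq> t ! i)"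
      unfolding k_def by (rule not_less_Least)
    then show "take k s ! i = take k t ! i" using \<open>i < k\<close> kk by auto
  qed
  have U: "U t k = U s k" using tk by (metis U_eq)
  have lt: "k < length t" using kk assms(1) by simp
  consider "s ! k < t ! k" | "t ! k < s ! k" using kk(2) by linarith
  then show ?thesis
  proof cases
    case 1
    show ?thesis
    proof (cases "even (U s k)")
      case True
      then have "coRGC_less s t" using assms(1) kk tk 1 by (intro co_intro[where k=k]) auto
      then show ?thesis by blast
    next
      case False
      then have "coRGC_less t s" using assms(1) lt kk tk 1 U by (intro co_intro[where k=k]) auto
      then show ?thesis by blast
    qed
  next
    case 2
    show ?thesis
    proof (cases "even (U s k)")
      case True
      then have "coRGC_less t s" using assms(1) lt kk tk 2 U by (intro co_intro[where k=k]) auto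
      then show ?thesis by blast
    next
      case False
      then have "coRGC_less s t" using assms(1) kk tk 2 by (intro co_intro[where k=k]) auto
      then show ?thesis by blast
    qed
  qed
qed

definition gnext :: "nat \<Rightarrow> nat" where
  "gnext x = (if x \<noteq> 0 \<and> odd x then x + 1 else 0)"

lemma gg: "gnext (gnext x) = 0"
  unfolding gnext_def by auto

definition fv :: "nat \<Rightarrow> nat list \<Rightarrow> nat" where
  "fv b q = (if even (U q (length q)) then 0 else min (Max (set q) + 1) b)"

definition lv :: "nat \<Rightarrow> nat list \<Rightarrow> nat" where
  "lv b q = (if even (U q (length q)) then min (Max (set q) + 1) b else 0)"

fun ext :: "(nat list \<Rightarrow> nat) \<Rightarrow> nat list \<Rightarrow> nat \<Rightarrow> nat list" where
  "ext f q 0 = q"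
| "ext f q (Suc r) = ext f (q @ [f q]) r"

lemma ext_prefix: "\<exists>ys. ext f q r = q @ ys"
proof (induction r arbitrary: q)
  case 0 show ?case by simp
next
  case (Suc r)
  then obtain ys where "ext f (q @ [f q]) r = (q @ [f q]) @ ys" by blast
  then show ?case by simp
qed

lemma ext_length: "length (ext f q r) = length q + r"
  by (induction r arbitrary: q) auto

lemma ext_take: "take (length q) (ext f q r) = q"
  using ext_prefix[of f q r] by auto

lemma ext_nth_low: "i < length q \<Longrightarrow> ext f q r ! i = q ! i"
  using ext_prefix[of f q r] by (auto simp: nth_append)

lemma ext_nth_len: "0 < r \<Longrightarrow> ext f q r ! length q = f q"
proof (cases r)
  case (Suc r')
  then have "ext f q r ! length q = (q @ [f q]) ! length q"
    by (simp add: ext_nth_low)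
  then show ?thesis by simp
qed simp

lemma U_snoc: "U (q @ [v]) (Suc (length q)) = U q (length q) + (if v \<noteq> 0 \<and> even v then 1 else 0)"
proof -
  have e: "{i. i < Suc (length q) \<and> (q @ [v]) ! i \<noteq> 0 \<and> even ((q @ [v]) ! i)} =
     {i. i < length q \<and> q ! i \<noteq> 0 \<and> even (q ! i)} \<union> (if v \<noteq> 0 \<and> even v then {length q} else {})"
    by (auto simp: nth_append less_Suc_eq)
  have f: "finite {i. i < length q \<and> q ! i \<noteq> 0 \<and> even (q ! i)}" by simp
  show ?thesis unfolding U_def e using f by (auto simp: card_insert_if)
qed

lemma U_snoc': "U (q @ [v]) (length (q @ [v])) = U q (length q) + (if v \<noteq> 0 \<and> even v then 1 else 0)"
  using U_snoc by simp

lemma Max_snoc: "q \<noteq> [] \<Longrightarrow> Max (set (q @ [v])) = max (Max (set q)) v"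
  by (simp add: max.commute)

lemma lv_g:
  assumes "q \<noteq> []" "Max (set q) \<le> b" "even b" "b \<ge> 1"
  shows "lv b (q @ [lv b q]) = gnext (lv b q)"
proof (cases "even (U q (length q))")
  case True
  define M where "M = Max (set q)"
  define v where "v = min (M + 1) b"
  have lvq: "lv b q = v" using True unfolding lv_def v_def M_def by simp
  have v1: "v \<ge> 1" "v \<ge> M" "v \<le> b" using assms(2,4) unfolding v_def M_def by (auto simp del: Max_le_iff)
  have Mx: "Max (set (q @ [v])) = v" using Max_snoc[OF assms(1)] v1 unfolding M_def by simp
  show ?thesis
  proof (cases "even v")
    case True
    then show ?thesis using \<open>even (U q (length q))\<close> v1 unfolding lvq
      by (simp add: lv_def U_snoc U_snoc' gnext_def)
  next
    case False
    then have "v \<noteq> b" using assms(3) by auto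
    then have "v + 1 \<le> b" using v1 by simp
    then show ?thesis using False \<open>even (U q (length q))\<close> v1 Mx unfolding lvq
      by (simp add: lv_def U_snoc U_snoc' gnext_def)
  qed
next
  case False
  then show ?thesis by (simp add: lv_def U_snoc U_snoc' gnext_def)
qed

lemma fv_g:
  assumes "q \<noteq> []" "Max (set q) \<le> b" "even b" "b \<ge> 1"
  shows "fv b (q @ [fv b q]) = gnext (fv b q)"
proof (cases "odd (U q (length q))")
  case True
  define M where "M = Max (set q)"
  define v where "v = min (M + 1) b"
  have fvq: "fv b q = v" using True unfolding fv_def v_def M_def by simp
  have v1: "v \<ge> 1" "v \<ge> M" "v \<le> b" using assms(2,4) unfolding v_def M_def by (auto simp del: Max_le_iff)
  have Mx: "Max (set (q @ [v])) = v" using Max_snoc[OF assms(1)] v1 unfolding M_def by simp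
  show ?thesis
  proof (cases "even v")
    case True
    then show ?thesis using \<open>odd (U q (length q))\<close> v1 unfolding fvq
      by (simp add: fv_def U_snoc U_snoc' gnext_def)
  next
    case False
    then have "v \<noteq> b" using assms(3) by auto
    then have "v + 1 \<le> b" using v1 by simp
    then show ?thesis using False \<open>odd (U q (length q))\<close> v1 Mx unfolding fvq
      by (simp add: fv_def U_snoc U_snoc' gnext_def)
  qed
next
  case False
  then show ?thesis by (simp add: fv_def U_snoc U_snoc' gnext_def)
qed

lemma rgf_snoc:
  assumes "is_rgf q" "v \<le> Max (set q) + 1"
  shows "is_rgf (q @ [v])"
proof -
  have ne: "q \<noteq> []" and q0: "q ! 0 = 0"
    and st: "\<And>i. Suc i < length q \<Longrightarrow> q ! Suc i \<le> Max (set (take (Suc i) q)) + 1"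
    using assms(1) unfolding is_rgf_def by auto
  have "(q @ [v]) ! 0 = 0" using ne q0 by (simp add: nth_append)
  moreover have "(q @ [v]) ! Suc i \<le> Max (set (take (Suc i) (q @ [v]))) + 1"
    if "Suc i < length (q @ [v])" for i
  proof (cases "Suc i < length q")
    case True
    then show ?thesis using st[OF True] by (simp add: nth_append)
  next
    case False
    then have "Suc i = length q" using that by simp
    then show ?thesis using assms(2) by (simp add: nth_append)
  qed
  ultimately show ?thesis unfolding is_rgf_def by simp
qed

lemma rgf_take:
  assumes "is_rgf s" "1 \<le> j"
  shows "is_rgf (take j s)"
proof -
  have ne: "s \<noteq> []" and q0: "s ! 0 = 0"
    and st: "\<And>i. Suc i < length s \<Longrightarrow> s ! Suc i \<le> Max (set (take (Suc i) s)) + 1"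
    using assms(1) unfolding is_rgf_def by auto
  have "take j s \<noteq> []" using ne assms(2) by simp
  moreover have "take j s ! 0 = 0" using q0 assms(2) by simp
  moreover have "take j s ! Suc i \<le> Max (set (take (Suc i) (take j s))) + 1"
    if "Suc i < length (take j s)" for i
  proof -
    have a: "Suc i < j" "Suc i < length s" using that by auto
    have "take (Suc i) (take j s) = take (Suc i) s" using a(1) by (simp add: min_def)
    moreover have "take j s ! Suc i = s ! Suc i" using a(1) by simp
    ultimately show ?thesis using st[OF a(2)] by simp
  qed
  ultimately show ?thesis unfolding is_rgf_def by blast
qed

lemma Max_take_le:
  assumes "s \<noteq> []" "1 \<le> j"
  shows "Max (set (take j s)) \<le> Max (set s)"
proof (rule Max_mono)
  show "set (take j s) \<subseteq> set s" by (rule set_take_subset)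
  show "set (take j s) \<noteq> {}" using assms by simp
qed simp

lemma ext_mem:
  assumes "is_rgf q" "Max (set q) \<le> b" "\<And>q'. f q' \<le> min (Max (set q') + 1) b"
  shows "ext f q r \<in> RGF_bounded (length q + r) b"
  using assms(1,2)
proof (induction r arbitrary: q)
  case 0
  then show ?case unfolding RGF_bounded_def by simp
next
  case (Suc r)
  have ne: "q \<noteq> []" using Suc.prems(1) unfolding is_rgf_def by simp
  have fq: "f q \<le> Max (set q) + 1" "f q \<le> b" using assms(3)[of q] by auto
  have "is_rgf (q @ [f q])" using rgf_snoc[OF Suc.prems(1) fq(1)] .
  moreover have "Max (set (q @ [f q])) \<le> b" using Max_snoc[OF ne] Suc.prems(2) fq(2) by simp
  ultimately have "ext f (q @ [f q]) r \<in> RGF_bounded (length (q @ [f q]) + r) b"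
    by (rule Suc.IH)
  then show ?case by simp
qed

lemma fv_le: "fv b q \<le> min (Max (set q) + 1) b" by (simp add: fv_def)
lemma lv_le: "lv b q \<le> min (Max (set q) + 1) b" by (simp add: lv_def)

lemma ext_rec:
  assumes g: "\<And>q'. q' \<noteq> [] \<Longrightarrow> Max (set q') \<le> b \<Longrightarrow> f (q' @ [f q']) = gnext (f q')"
    and le: "\<And>q'. f q' \<le> min (Max (set q') + 1) b"
  shows "q \<noteq> [] \<Longrightarrow> Max (set q) \<le> b \<Longrightarrow> length q \<le> p \<Longrightarrow> Suc p < length q + r \<Longrightarrow>
    ext f q r ! Suc p = gnext (ext f q r ! p)"
proof (induction r arbitrary: q)
  case 0
  then show ?case by simp
next
  case (Suc r)
  define q1 where "q1 = q @ [f q]"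
  have e: "ext f q (Suc r) = ext f q1 r" unfolding q1_def by simp
  have ne1: "q1 \<noteq> []" unfolding q1_def by simp
  have m1: "Max (set q1) \<le> b" unfolding q1_def using Max_snoc[OF Suc.prems(1)] Suc.prems(2) le[of q] by simp
  show ?case
  proof (cases "length q1 \<le> p")
    case True
    have "Suc p < length q1 + r" using Suc.prems(4) unfolding q1_def by simp
    then show ?thesis unfolding e using Suc.IH[OF ne1 m1 True] by simp
  next
    case False
    then have p: "p = length q" using Suc.prems(3) unfolding q1_def by simp
    have r0: "0 < r" using Suc.prems(4) p by simp
    have "ext f q1 r ! Suc p = f q1" using ext_nth_len[OF r0, of f q1] p unfolding q1_def by simp
    moreover have "ext f q1 r ! p = f q" using ext_nth_low[of p q1 f r] p unfolding q1_def by simp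
    moreover have "f q1 = gnext (f q)" unfolding q1_def using g[OF Suc.prems(1,2)] .
    ultimately show ?thesis unfolding e by simp
  qed
qed

lemma step_bound:
  assumes "is_rgf s" "Max (set s) \<le> b" "1 \<le> j" "j < length s"
  shows "s ! j \<le> Max (set (take j s)) + 1" "s ! j \<le> b"
proof -
  have "Suc (j - 1) < length s" using assms by simp
  then have "s ! Suc (j - 1) \<le> Max (set (take (Suc (j - 1)) s)) + 1"
    using assms(1) unfolding is_rgf_def by blast
  then show "s ! j \<le> Max (set (take j s)) + 1" using assms(3) by simp
  have "s ! j \<in> set s" using assms(4) by simp
  then have "s ! j \<le> Max (set s)" by simp
  then show "s ! j \<le> b" using assms(2) by simp
qed

lemma last_max:
  assumes "is_rgf s" "Max (set s) \<le> b"
  shows "1 \<le> j \<Longrightarrow> length s = j + r \<Longrightarrow>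
    s = ext (lv b) (take j s) r \<or> coRGC_less s (ext (lv b) (take j s) r)"
proof (induction r arbitrary: j)
  case 0
  then show ?case by simp
next
  case (Suc r)
  define q where "q = take j s"
  have jl: "j < length s" using Suc.prems by simp
  have lq: "length q = j" unfolding q_def using jl by simp
  have sb: "s ! j \<le> Max (set q) + 1" "s ! j \<le> b"
    using step_bound[OF assms Suc.prems(1) jl] unfolding q_def by auto
  have e: "ext (lv b) q (Suc r) = ext (lv b) (q @ [lv b q]) r" by simp
  show ?case
  proof (cases "s ! j = lv b q")
    case True
    have "take (Suc j) s = q @ [lv b q]" using jl True
      by (simp add: q_def take_Suc_conv_app_nth)
    moreover have "s = ext (lv b) (take (Suc j) s) r \<or> coRGC_less s (ext (lv b) (take (Suc j) s) r)"
      using Suc.IH[of "Suc j"] Suc.prems by simp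
    ultimately show ?thesis unfolding q_def[symmetric] using e by simp
  next
    case False
    define E where "E = ext (lv b) q (Suc r)"
    have lE: "length s = length E" unfolding E_def using Suc.prems(2) lq by (simp add: ext_length)
    have tE: "take j s = take j E" unfolding E_def using ext_take[of q "lv b" "Suc r"] lq q_def by simp
    have nE: "E ! j = lv b q" unfolding E_def using ext_nth_len[of "Suc r" "lv b" q] lq by simp
    have Uq: "U s j = U q (length q)" using U_take[of s j] lq q_def by simp
    have c: "(even (U s j) \<and> s ! j < E ! j) \<or> (odd (U s j) \<and> s ! j > E ! j)"
      using False sb unfolding nE Uq lv_def by auto
    have "coRGC_less s E"
      using lE jl tE c by (intro co_intro[where k=j]) auto
    then show ?thesis unfolding E_def q_def by simp
  qed
qed

lemma first_min:
  assumes "is_rgf s" "Max (set s) \<le> b"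
  shows "1 \<le> j \<Longrightarrow> length s = j + r \<Longrightarrow>
    s = ext (fv b) (take j s) r \<or> coRGC_less (ext (fv b) (take j s) r) s"
proof (induction r arbitrary: j)
  case 0
  then show ?case by simp
next
  case (Suc r)
  define q where "q = take j s"
  have jl: "j < length s" using Suc.prems by simp
  have lq: "length q = j" unfolding q_def using jl by simp
  have sb: "s ! j \<le> Max (set q) + 1" "s ! j \<le> b"
    using step_bound[OF assms Suc.prems(1) jl] unfolding q_def by auto
  have e: "ext (fv b) q (Suc r) = ext (fv b) (q @ [fv b q]) r" by simp
  show ?case
  proof (cases "s ! j = fv b q")
    case True
    have "take (Suc j) s = q @ [fv b q]" using jl True
      by (simp add: q_def take_Suc_conv_app_nth)
    moreover have "s = ext (fv b) (take (Suc j) s) r \<or> coRGC_less (ext (fv b) (take (Suc j) s) r) s"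
      using Suc.IH[of "Suc j"] Suc.prems by simp
    ultimately show ?thesis unfolding q_def[symmetric] using e by simp
  next
    case False
    define E where "E = ext (fv b) q (Suc r)"
    have lE: "length E = length s" unfolding E_def using Suc.prems(2) lq by (simp add: ext_length)
    have tE: "take j E = take j s" unfolding E_def using ext_take[of q "fv b" "Suc r"] lq q_def by simp
    have nE: "E ! j = fv b q" unfolding E_def using ext_nth_len[of "Suc r" "fv b" q] lq by simp
    have Uq: "U E j = U q (length q)" using U_take[of E j] lq tE q_def by simp
    have c: "(even (U E j) \<and> E ! j < s ! j) \<or> (odd (U E j) \<and> E ! j > s ! j)"
      using False sb unfolding nE Uq fv_def by auto
    have "coRGC_less E s"
      using lE jl tE c by (intro co_intro[where k=j]) auto
    then show ?thesis unfolding E_def q_def by simp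
  qed
qed

lemma co_asym: "coRGC_less s t \<Longrightarrow> \<not> coRGC_less t s"
  using co_trans co_irrefl by blast

lemma sort_exists:
  assumes "finite A" "\<forall>y\<in>A. length y = n"
  shows "\<exists>L. set L = A \<and> distinct L \<and> sorted_wrt coRGC_less L"
  using assms
proof (induction A rule: finite_induct)
  case empty
  show ?case by (intro exI[of _ "[]"]) simp
next
  case (insert x F)
  then obtain L where L: "set L = F" "distinct L" "sorted_wrt coRGC_less L" by auto
  define L1 where "L1 = filter (\<lambda>y. coRGC_less y x) L"
  define L2 where "L2 = filter (\<lambda>y. coRGC_less x y) L"
  have tot: "coRGC_less y x \<or> coRGC_less x y" if "y \<in> F" for y
  proof -
    have "length y = length x" using insert.prems that by simp
    moreover have "y \<noteq> x" using insert.hyps(2) that by auto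
    ultimately show ?thesis using co_total by blast
  qed
  have "set (L1 @ x # L2) = insert x F"
    using tot L(1) unfolding L1_def L2_def by auto
  moreover have "distinct (L1 @ x # L2)"
    using L(2) co_irrefl co_asym unfolding L1_def L2_def by (auto simp: distinct_append)
  moreover have "sorted_wrt coRGC_less (L1 @ x # L2)"
  proof -
    have "sorted_wrt coRGC_less L1" "sorted_wrt coRGC_less L2"
      unfolding L1_def L2_def using L(3) by (auto intro: sorted_wrt_filter)
    moreover have "\<forall>y\<in>set L1. \<forall>z\<in>set (x # L2). coRGC_less y z"
      unfolding L1_def L2_def using co_trans by auto
    moreover have "\<forall>z\<in>set L2. coRGC_less x z" unfolding L2_def by auto
    ultimately show ?thesis by (simp add: sorted_wrt_append)
  qed
  ultimately show ?case by blast
qed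

lemma sorted_idx:
  assumes "sorted_wrt coRGC_less L" "a < length L" "c < length L" "coRGC_less (L ! a) (L ! c)"
  shows "a < c"
proof (rule ccontr)
  assume "\<not> a < c"
  then consider "a = c" | "c < a" by linarith
  then show False
  proof cases
    case 1 then show False using assms(4) co_irrefl by simp
  next
    case 2
    then have "coRGC_less (L ! c) (L ! a)" using sorted_wrt_nth_less assms(1,2) by blast
    then show False using assms(4) co_asym by blast
  qed
qed

lemma consec:
  assumes b: "even b" "b \<ge> 2"
    and sm: "s \<in> RGF_bounded n b" and tm: "t \<in> RGF_bounded n b" and st: "coRGC_less s t"
    and nb: "\<And>w. w \<in> RGF_bounded n b \<Longrightarrow> coRGC_less s w \<Longrightarrow> coRGC_less w t \<Longrightarrow> False"
  shows "card (diff_positions s t) \<le> 3 \<and> (\<exists>a c. diff_positions s t = {a..<c})"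
proof -
  have ls: "length s = n" "is_rgf s" "Max (set s) \<le> b" using sm unfolding RGF_bounded_def by auto
  have lt: "length t = n" "is_rgf t" "Max (set t) \<le> b" using tm unfolding RGF_bounded_def by auto
  obtain k where k: "k < n" "take k s = take k t" "s ! k \<noteq> t ! k"
    "(even (U s k) \<and> s ! k < t ! k) \<or> (odd (U s k) \<and> s ! k > t ! k)"
    using st ls(1) unfolding coRGC_less_def by auto
  define qs where "qs = take (Suc k) s"
  define qt where "qt = take (Suc k) t"
  have lqs: "length qs = Suc k" using k(1) ls(1) unfolding qs_def by simp
  have lqt: "length qt = Suc k" using k(1) lt(1) unfolding qt_def by simp
  have sne: "s \<noteq> []" using ls(2) unfolding is_rgf_def by simp
  have tne: "t \<noteq> []" using lt(2) unfolding is_rgf_def by simp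
  have ms: "Max (set (take (Suc k) s)) \<le> Max (set s)" by (rule Max_take_le[OF sne]) simp
  have qsv: "is_rgf qs" "Max (set qs) \<le> b" "qs \<noteq> []"
    using rgf_take[OF ls(2), of "Suc k"] order_trans[OF ms ls(3)] sne
    unfolding qs_def by (auto simp del: Max_le_iff)
  have mt: "Max (set (take (Suc k) t)) \<le> Max (set t)" by (rule Max_take_le[OF tne]) simp
  have qtv: "is_rgf qt" "Max (set qt) \<le> b" "qt \<noteq> []"
    using rgf_take[OF lt(2), of "Suc k"] order_trans[OF mt lt(3)] tne
    unfolding qt_def by (auto simp del: Max_le_iff)
  have nk: "Suc k + (n - Suc k) = n" using k(1) by simp
  define w where "w = ext (lv b) qs (n - Suc k)"
  have wm: "w \<in> RGF_bounded n b"
    using ext_mem[OF qsv(1,2) lv_le, of "n - Suc k"] lqs nk unfolding w_def by simp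
  have sw: "s = w \<or> coRGC_less s w"
    using last_max[OF ls(2,3), of "Suc k" "n - Suc k"] ls(1) k(1) unfolding w_def qs_def by simp
  have lw: "length w = n" using wm unfolding RGF_bounded_def by simp
  have tw: "take (Suc k) w = qs" using ext_take[of qs "lv b" "n - Suc k"] lqs unfolding w_def by simp
  have twk: "take k w = take k s"
  proof -
    have "take k w = take k (take (Suc k) w)" by simp
    also have "\<dots> = take k s" unfolding tw qs_def by simp
    finally show ?thesis .
  qed
  have wk: "w ! k = s ! k"
  proof -
    have "w ! k = take (Suc k) w ! k" by simp
    also have "\<dots> = s ! k" unfolding tw qs_def by simp
    finally show ?thesis .
  qed
  have Uw: "U w k = U s k" using twk by (rule U_eq)
  have "coRGC_less w t"
    using lw lt(1) k twk wk Uw by (intro co_intro[where k=k]) auto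
  then have sw2: "s = w" using sw nb[OF wm] by blast
  define w2 where "w2 = ext (fv b) qt (n - Suc k)"
  have wm2: "w2 \<in> RGF_bounded n b"
    using ext_mem[OF qtv(1,2) fv_le, of "n - Suc k"] lqt nk unfolding w2_def by simp
  have tw2: "t = w2 \<or> coRGC_less w2 t"
    using first_min[OF lt(2,3), of "Suc k" "n - Suc k"] lt(1) k(1) unfolding w2_def qt_def by simp
  have lw2: "length w2 = n" using wm2 unfolding RGF_bounded_def by simp
  have tw2t: "take (Suc k) w2 = qt" using ext_take[of qt "fv b" "n - Suc k"] lqt unfolding w2_def by simp
  have twk2: "take k w2 = take k t"
  proof -
    have "take k w2 = take k (take (Suc k) w2)" by simp
    also have "\<dots> = take k t" unfolding tw2t qt_def by simp
    finally show ?thesis .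
  qed
  have wk2: "w2 ! k = t ! k"
  proof -
    have "w2 ! k = take (Suc k) w2 ! k" by simp
    also have "\<dots> = t ! k" unfolding tw2t qt_def by simp
    finally show ?thesis .
  qed
  have "coRGC_less s w2"
    using lw2 ls(1) k twk2 wk2 by (intro co_intro[where k=k]) auto
  then have tw3: "t = w2" using tw2 nb[OF wm2] by blast
  have b1: "b \<ge> 1" using b by simp
  have gl: "\<And>q'. q' \<noteq> [] \<Longrightarrow> Max (set q') \<le> b \<Longrightarrow> lv b (q' @ [lv b q']) = gnext (lv b q')"
    using lv_g b(1) b1 by blast
  have gf: "\<And>q'. q' \<noteq> [] \<Longrightarrow> Max (set q') \<le> b \<Longrightarrow> fv b (q' @ [fv b q']) = gnext (fv b q')"
    using fv_g b(1) b1 by blast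
  have rs: "s ! Suc p = gnext (s ! p)" if "Suc k \<le> p" "Suc p < n" for p
    using ext_rec[of b "lv b", OF gl lv_le qsv(3) qsv(2), of p "n - Suc k"] that lqs nk sw2
    unfolding w_def by simp
  have rt: "t ! Suc p = gnext (t ! p)" if "Suc k \<le> p" "Suc p < n" for p
    using ext_rec[of b "fv b", OF gf fv_le qtv(3) qtv(2), of p "n - Suc k"] that lqt nk tw3
    unfolding w2_def by simp
  have zs: "s ! p = 0 \<and> t ! p = 0" if "Suc (Suc (Suc k)) \<le> p" "p < n" for p
  proof -
    define p' where "p' = p - 2"
    have p': "p = Suc (Suc p')" "Suc k \<le> p'" using that(1) unfolding p'_def by auto
    have a1: "s ! Suc (Suc p') = gnext (s ! Suc p')" by (rule rs) (use p' that in auto)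
    have a2: "s ! Suc p' = gnext (s ! p')" by (rule rs) (use p' that in auto)
    have a3: "t ! Suc (Suc p') = gnext (t ! Suc p')" by (rule rt) (use p' that in auto)
    have a4: "t ! Suc p' = gnext (t ! p')" by (rule rt) (use p' that in auto)
    have "s ! p = gnext (gnext (s ! p'))" unfolding p'(1) a1 a2 ..
    moreover have "t ! p = gnext (gnext (t ! p'))" unfolding p'(1) a3 a4 ..
    ultimately show ?thesis by (simp add: gg)
  qed
  define D where "D = diff_positions s t"
  have inD: "p \<in> D \<longleftrightarrow> p < n \<and> s ! p \<noteq> t ! p" for p
    unfolding D_def diff_positions_def ls(1) by simp
  have low: "s ! p = t ! p" if "p < k" for p using take_eq_nth[OF k(2) that] .
  have mid: "s ! Suc (Suc k) = t ! Suc (Suc k)" if "Suc (Suc k) < n" "s ! Suc k = t ! Suc k"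
  proof -
    have "s ! Suc (Suc k) = gnext (s ! Suc k)" by (rule rs) (use that in auto)
    moreover have "t ! Suc (Suc k) = gnext (t ! Suc k)" by (rule rt) (use that in auto)
    ultimately show ?thesis using that(2) by simp
  qed
  define c where "c = (if Suc (Suc k) \<in> D then k + 3 else if Suc k \<in> D then k + 2 else k + 1)"
  have Deq: "D = {k..<c}"
  proof (rule set_eqI)
    fix p
    consider "p < k" | "p = k" | "p = Suc k" | "p = Suc (Suc k)" | "Suc (Suc (Suc k)) \<le> p" by linarith
    then show "p \<in> D \<longleftrightarrow> p \<in> {k..<c}"
    proof cases
      case 1 then show ?thesis using low[OF 1] inD by auto
    next
      case 2 then show ?thesis using inD k(1,3) unfolding c_def by auto
    next
      case 3 then show ?thesis using inD mid unfolding c_def by auto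
    next
      case 4 then show ?thesis unfolding c_def by auto
    next
      case 5 then show ?thesis using inD zs[OF 5] unfolding c_def by auto
    qed
  qed
  have "c \<le> k + 3" unfolding c_def by simp
  then have cd: "card D \<le> 3" unfolding Deq by simp
  show ?thesis
  proof (intro conjI exI)
    show "card (diff_positions s t) \<le> 3" using cd unfolding D_def .
    show "diff_positions s t = {k..<c}" using Deq unfolding D_def .
  qed
qed

theorem theorem2:
  fixes n b :: nat
  assumes "n \<ge> 1" and "b \<ge> 2" and "even b"
  shows "(\<exists>L. set L = RGF_bounded n b \<and> distinct L \<and> sorted_wrt coRGC_less L) \<and>
         (\<forall>L. set L = RGF_bounded n b \<and> distinct L \<and> sorted_wrt coRGC_less L
              \<longrightarrow> adjacent_gray 3 L)"
proof
  have lenA: "\<forall>y\<in>RGF_bounded n b. length y = n" by (simp add: RGF_bounded_def)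
  have finA: "finite (RGF_bounded n b)"
  proof (rule finite_subset)
    show "RGF_bounded n b \<subseteq> {xs. set xs \<subseteq> {0..b} \<and> length xs = n}"
    proof
      fix s assume sm: "s \<in> RGF_bounded n b"
      have "x \<le> b" if "x \<in> set s" for x
      proof -
        have "x \<le> Max (set s)" using that by simp
        then show ?thesis using sm unfolding RGF_bounded_def by (auto simp del: Max_ge_iff)
      qed
      then show "s \<in> {xs. set xs \<subseteq> {0..b} \<and> length xs = n}" using sm
        unfolding RGF_bounded_def by auto
    qed
    show "finite {xs. set xs \<subseteq> {0..b} \<and> length xs = n}"
      by (rule finite_lists_length_eq) simp
  qed
  show "\<exists>L. set L = RGF_bounded n b \<and> distinct L \<and> sorted_wrt coRGC_less L"
    by (rule sort_exists[OF finA lenA])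
  show "\<forall>L. set L = RGF_bounded n b \<and> distinct L \<and> sorted_wrt coRGC_less L
              \<longrightarrow> adjacent_gray 3 L"
  proof (intro allI impI)
    fix L assume H: "set L = RGF_bounded n b \<and> distinct L \<and> sorted_wrt coRGC_less L"
    then have sL: "set L = RGF_bounded n b" and so: "sorted_wrt coRGC_less L" by auto
    show "adjacent_gray 3 L" unfolding adjacent_gray_def
    proof (intro conjI allI impI)
      show "\<forall>x\<in>set L. \<forall>y\<in>set L. length x = length y" using sL lenA by simp
      fix i assume i: "Suc i < length L"
      have sm: "L ! i \<in> RGF_bounded n b" using i sL nth_mem[of i L] by simp
      have tm: "L ! Suc i \<in> RGF_bounded n b" using i sL nth_mem[of "Suc i" L] by simp
      have st: "coRGC_less (L ! i) (L ! Suc i)" using sorted_wrt_nth_less[OF so _ i] by simp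
      have nb: False if "w \<in> RGF_bounded n b" "coRGC_less (L ! i) w" "coRGC_less w (L ! Suc i)" for w
      proof -
        have "w \<in> set L" using that(1) sL by simp
        then obtain j where j: "j < length L" "L ! j = w" by (auto simp: in_set_conv_nth)
        have "i < j" using sorted_idx[OF so _ j(1)] i that(2) j(2) by simp
        moreover have "j < Suc i" using sorted_idx[OF so j(1) i] that(3) j(2) by simp
        ultimately show False by simp
      qed
      have C: "card (diff_positions (L ! i) (L ! Suc i)) \<le> 3 \<and>
          (\<exists>a c. diff_positions (L ! i) (L ! Suc i) = {a..<c})"
        using consec[OF assms(3) assms(2) sm tm st] nb by blast
      then show "card (diff_positions (L ! i) (L ! Suc i)) \<le> 3" by simp
      from C show "\<exists>a c. diff_positions (L ! i) (L ! Suc i) = {a..<c}" by simp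
    qed
  qed
qed

end
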